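(* Let $A\subseteq\Theta$ be a Borel set with $\Theta_0^\delta\subseteq A$ for some $\delta>0$, and suppose $(\mathcal{H},L)$ has the strong uniform convergence property with respect to $\mathcal{D}$, with strong uniform convergence function $f$. Let $\alpha>0$. Suppose one of the following holds: (a) the risk minimizer $\theta_0\in\arg\min_\Theta R$ exists, an empirical risk minimizer $\widehat{\theta}_S\in\arg\min_\Theta\widehat{R}_S$ exists for every sample $S$, and $\varepsilon(m,\alpha):=\inf\{\varepsilon>0\mid m\ge f(\varepsilon/2,\alpha)\}$; (b) $\varepsilon(m,\alpha):=\inf\{\varepsilon>0\mid m\ge\inf_{0<\delta'<\varepsilon}f((\varepsilon-\delta')/2,\alpha)\}$. Then $$\liminf_{m\to\infty}\Pr_{S\sim\mathcal{D}^m}\big[\mathrm{pl}^{\mathrm{boot},S}_{\varepsilon(m,\alpha)}(A)\ge1-\alpha\big]\ge1-\alpha.$$ Moreover, $\Pr_{S\sim\mathcal{D}^m}[\mathrm{pl}^{\mathrm{boot},S}_{\varepsilon(m,\alpha)}(A)\ge1-\alpha]\ge1-\alpha$ holds for every $m$ with $\varepsilon(m,\alpha)\le\delta$ in case (a), and for every $m$ with $\varepsilon(m,\alpha)\le\delta/2$ in case (b).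
   Context: Setting: data are i.i.d. from a distribution $\mathcal{D}$ on $\mathcal{X}\times\mathcal{Y}$; $\mathcal{H}=\{x\mapsto h(x;\theta)\mid\theta\in\Theta\}$ with $\Theta$ a topological space, $L:\mathcal{Y}\times\mathcal{Y}\to\mathbb{R}$ a loss. For a distribution $\widetilde{\mathcal{D}}$ on $\mathcal{X}\times\mathcal{Y}$ write $R_{\widetilde{\mathcal{D}}}(\theta)=\mathbb{E}_{\widetilde{\mathcal{D}}}[L(h(X;\theta),Y)]$ and $R=R_{\mathcal{D}}$ (assumed finite); for a sample $S=((X_i,Y_i))_{i=1}^m$, $\widehat{R}_S(\theta)=\frac1m\sum_{i=1}^mL(h(X_i;\theta),Y_i)$. All events are assumed measurable. $\widehat{\Theta}_S^\varepsilon=\{\theta\mid\widehat{R}_S(\theta)\le\inf_\vartheta\widehat{R}_S(\vartheta)+\varepsilon\}$, $\Theta_0^\delta=\{\theta\mid R(\theta)\le\inf_\vartheta R(\vartheta)+\delta\}$. Strong uniform convergence property: there is $w:\mathbb{R}^+\times\mathbb{R}^+\to\mathbb{R}$ (a "witness") such that for all $\varepsilon,\alpha>0$ and integers $m\ge w(\varepsilon,\alpha)$: (1) $\Pr_{S\sim\mathcal{D}^m}[\sup_\theta|R(\theta)-\widehat{R}_S(\theta)|\le\varepsilon]\ge1-\alpha$, and (2) $\inf_{\widetilde{\mathcal{D}}\in\mathcal{B}_m}\Pr_{S'\sim\widetilde{\mathcal{D}}^m}[\sup_\theta|R_{\widetilde{\mathcal{D}}}(\theta)-\widehat{R}_{S'}(\theta)|\le\varepsilon]\ge1-\alpha$,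 where $\mathcal{B}_m$ is the set of bootstrap resampling distributions, i.e. the empirical (uniform) distributions $\mathrm{Unif}(S)$ on the points of $S$ for every possible realization $S$ of $\mathcal{D}^m$. The strong uniform convergence function is $f(\varepsilon,\alpha)=\inf_w\lceil w(\varepsilon,\alpha)\rceil$ over all such witnesses. Bootstrapped plausibility: for an observed sample $S$ of size $m$, $\mathrm{pl}^{\mathrm{boot},S}_\varepsilon(A)=\Pr_{S'\sim\mathrm{Unif}(S)^m}[\widehat{\Theta}_{S'}^\varepsilon\cap A\ne\varnothing\mid\widehat{\Theta}_{S'}^\varepsilon\ne\varnothing]$ (the almost-sure limit of $\frac1B\sum_{i=1}^BI(\widehat{\Theta}_{S_i}^\varepsilon\cap A\neq\varnothing)$ over independent resamples $S_i$ with nonempty $\widehat{\Theta}_{S_i}^\varepsilon$), assumed well defined. *)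

theory Defs
  imports "HOL-Probability.Probability"
begin

(* Samples of size m are functions nat => 'x * 'y, extensional on {..<m}. *)

definition sample_dist :: "('x \<times> 'y) measure \<Rightarrow> nat \<Rightarrow> (nat \<Rightarrow> 'x \<times> 'y) measure" where
  "sample_dist D m = PiM {..<m} (\<lambda>_. D)"

definition risk :: "('y \<Rightarrow> 'y \<Rightarrow> real) \<Rightarrow> ('x \<Rightarrow> 'p \<Rightarrow> 'y) \<Rightarrow> ('x \<times> 'y) measure \<Rightarrow> 'p \<Rightarrow> real" where
  "risk L h M th = (\<integral>z. L (h (fst z) th) (snd z) \<partial>M)"

definition emp_risk :: "('y \<Rightarrow> 'y \<Rightarrow> real) \<Rightarrow> ('x \<Rightarrow> 'p \<Rightarrow> 'y) \<Rightarrow> nat \<Rightarrow> (nat \<Rightarrow> 'x \<times> 'y) \<Rightarrow> 'p \<Rightarrow> real" where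
  "emp_risk L h m S th = (1 / real m) * (\<Sum>i<m. L (h (fst (S i)) th) (snd (S i)))"

definition unif_sample :: "nat \<Rightarrow> (nat \<Rightarrow> 'z) \<Rightarrow> 'z pmf" where
  "unif_sample m S = map_pmf S (pmf_of_set {..<m})"

definition boot_dist :: "nat \<Rightarrow> (nat \<Rightarrow> 'z) \<Rightarrow> (nat \<Rightarrow> 'z) pmf" where
  "boot_dist m S = Pi_pmf {..<m} undefined (\<lambda>_. unif_sample m S)"

definition emp_eps_set :: "('y \<Rightarrow> 'y \<Rightarrow> real) \<Rightarrow> ('x \<Rightarrow> 'p \<Rightarrow> 'y) \<Rightarrow> nat \<Rightarrow> (nat \<Rightarrow> 'x \<times> 'y) \<Rightarrow> real \<Rightarrow> 'p set" where
  "emp_eps_set L h m S eps =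
     {th. ereal (emp_risk L h m S th) \<le> (INF v. ereal (emp_risk L h m S v)) + ereal eps}"

definition risk_delta_set :: "('y \<Rightarrow> 'y \<Rightarrow> real) \<Rightarrow> ('x \<Rightarrow> 'p \<Rightarrow> 'y) \<Rightarrow> ('x \<times> 'y) measure \<Rightarrow> real \<Rightarrow> 'p set" where
  "risk_delta_set L h D del =
     {th. ereal (risk L h D th) \<le> (INF v. ereal (risk L h D v)) + ereal del}"

definition pl_boot :: "('y \<Rightarrow> 'y \<Rightarrow> real) \<Rightarrow> ('x \<Rightarrow> 'p \<Rightarrow> 'y) \<Rightarrow> nat \<Rightarrow> (nat \<Rightarrow> 'x \<times> 'y) \<Rightarrow> real \<Rightarrow> 'p set \<Rightarrow> real" where
  "pl_boot L h m S eps A =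
     measure_pmf.prob (boot_dist m S)
        {S'. emp_eps_set L h m S' eps \<inter> A \<noteq> {} \<and> emp_eps_set L h m S' eps \<noteq> {}}
     / measure_pmf.prob (boot_dist m S) {S'. emp_eps_set L h m S' eps \<noteq> {}}"

definition suc_witness :: "('x \<times> 'y) measure \<Rightarrow> ('y \<Rightarrow> 'y \<Rightarrow> real) \<Rightarrow> ('x \<Rightarrow> 'p \<Rightarrow> 'y)
    \<Rightarrow> (real \<Rightarrow> real \<Rightarrow> real) \<Rightarrow> bool" where
  "suc_witness D L h w \<longleftrightarrow>
     (\<forall>eps>0. \<forall>\<alpha>>0. \<forall>m::nat. real m \<ge> w eps \<alpha> \<longrightarrow>
        measure (sample_dist D m)
          {S \<in> space (sample_dist D m). \<forall>th. \<bar>risk L h D th - emp_risk L h m S th\<bar> \<le> eps}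
          \<ge> 1 - \<alpha>
      \<and> (\<forall>S \<in> space (sample_dist D m).
          measure_pmf.prob (boot_dist m S)
            {S'. \<forall>th. \<bar>risk L h (measure_pmf (unif_sample m S)) th - emp_risk L h m S' th\<bar> \<le> eps}
          \<ge> 1 - \<alpha>))"

definition has_suc :: "('x \<times> 'y) measure \<Rightarrow> ('y \<Rightarrow> 'y \<Rightarrow> real) \<Rightarrow> ('x \<Rightarrow> 'p \<Rightarrow> 'y) \<Rightarrow> bool" where
  "has_suc D L h \<longleftrightarrow> (\<exists>w. suc_witness D L h w)"

text \<open>Strong uniform convergence function f (an extended real; -\<infinity> is possible in degenerate cases).\<close>
definition suc_fun :: "('x \<times> 'y) measure \<Rightarrow> ('y \<Rightarrow> 'y \<Rightarrow> real) \<Rightarrow> ('x \<Rightarrow> 'p \<Rightarrow> 'y)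
    \<Rightarrow> real \<Rightarrow> real \<Rightarrow> ereal" where
  "suc_fun D L h eps \<alpha> = (INF w \<in> {w. suc_witness D L h w}. ereal (of_int \<lceil>w eps \<alpha>\<rceil>))"

text \<open>eps(m,alpha) in case (a) and case (b); Inf of the empty set is +\<infinity>.\<close>
definition eps_a :: "(real \<Rightarrow> real \<Rightarrow> ereal) \<Rightarrow> nat \<Rightarrow> real \<Rightarrow> ereal" where
  "eps_a f m \<alpha> = Inf {ereal e | e. e > 0 \<and> ereal (real m) \<ge> f (e / 2) \<alpha>}"

definition eps_b :: "(real \<Rightarrow> real \<Rightarrow> ereal) \<Rightarrow> nat \<Rightarrow> real \<Rightarrow> ereal" where
  "eps_b f m \<alpha> = Inf {ereal e | e. e > 0 \<and>
      ereal (real m) \<ge> (INF d \<in> {0<..<e}. f ((e - d) / 2) \<alpha>)}"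

end

theory Submission
  imports Defs
begin

lemma keyA:
  fixes r r' :: "'p \<Rightarrow> real"
  assumes m0: "\<forall>\<theta>. r th0 \<le> r \<theta>" and m1: "\<forall>\<theta>. r' t \<le> r' \<theta>"
    and dev: "\<forall>\<theta>. \<bar>r \<theta> - r' \<theta>\<bar> \<le> e" and e0: "0 \<le> e" and ed: "e \<le> \<delta>"
    and sub: "{th. ereal (r th) \<le> (INF v. ereal (r v)) + ereal \<delta>} \<subseteq> A"
  shows "{th. ereal (r' th) \<le> (INF v. ereal (r' v)) + ereal e} \<inter> A \<noteq> {}
       \<and> {th. ereal (r' th) \<le> (INF v. ereal (r' v)) + ereal e} \<noteq> {}"
proof -
  have I1: "(INF v. ereal (r v)) = ereal (r th0)"
    by (rule antisym) (auto intro!: INF_lower2 INF_greatest simp: m0)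
  have I2: "(INF v. ereal (r' v)) = ereal (r' t)"
    by (rule antisym) (auto intro!: INF_lower2 INF_greatest simp: m1)
  show ?thesis
  proof (cases "r' th0 \<le> r' t + e")
    case True
    have "th0 \<in> A" using sub I1 \<open>e \<le> \<delta>\<close> e0 by auto
    moreover have "th0 \<in> {th. ereal (r' th) \<le> (INF v. ereal (r' v)) + ereal e}" using True I2 by simp
    ultimately show ?thesis by blast
  next
    case False
    have "r t \<le> r' t + e" using dev[rule_format, of t] by linarith
    also have "\<dots> < r' th0" using False by simp
    also have "\<dots> \<le> r th0 + e" using dev[rule_format, of th0] by linarith
    finally have "t \<in> A" using sub I1 ed by auto
    moreover have "t \<in> {th. ereal (r' th) \<le> (INF v. ereal (r' v)) + ereal e}" using I2 e0 by simp
    ultimately show ?thesis by blast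
  qed
qed

lemma ereal_inf_real:
  fixes r :: "'p \<Rightarrow> real"
  assumes "\<forall>\<theta>. B \<le> r \<theta>"
  obtains i where "(INF v. ereal (r v)) = ereal i" "\<forall>\<theta>. i \<le> r \<theta>" "\<And>x. x > i \<Longrightarrow> \<exists>\<theta>. r \<theta> < x"
proof -
  let ?I = "(INF v. ereal (r v))"
  have lo: "ereal B \<le> ?I" using assms by (auto intro!: INF_greatest)
  have hi: "?I \<le> ereal (r undefined)" by (rule INF_lower) simp
  obtain i where i: "?I = ereal i" using lo hi by (cases ?I) auto
  have "\<forall>\<theta>. i \<le> r \<theta>" using i by (metis INF_lower UNIV_I ereal_less_eq(3))
  moreover have "\<exists>\<theta>. r \<theta> < x" if "x > i" for x
  proof -
    have "?I < ereal x" using i that by simp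
    then show ?thesis by (auto simp: INF_less_iff)
  qed
  ultimately show ?thesis using that i by blast
qed

lemma keyB:
  fixes r r' :: "'p \<Rightarrow> real"
  assumes lb: "\<forall>\<theta>. B \<le> r \<theta>"
    and dev: "\<forall>\<theta>. \<bar>r \<theta> - r' \<theta>\<bar> \<le> e" and e0: "0 < e" and ed: "2 * e \<le> \<delta>"
    and sub: "{th. ereal (r th) \<le> (INF v. ereal (r v)) + ereal \<delta>} \<subseteq> A"
  shows "{th. ereal (r' th) \<le> (INF v. ereal (r' v)) + ereal e} \<inter> A \<noteq> {}
       \<and> {th. ereal (r' th) \<le> (INF v. ereal (r' v)) + ereal e} \<noteq> {}"
proof -
  obtain i where i: "(INF v. ereal (r v)) = ereal i" "\<forall>\<theta>. i \<le> r \<theta>" "\<And>x. x > i \<Longrightarrow> \<exists>\<theta>. r \<theta> < x"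
    using ereal_inf_real[OF lb] by blast
  have lb': "\<forall>\<theta>. B - e \<le> r' \<theta>" using lb dev by (smt (verit))
  obtain j where j: "(INF v. ereal (r' v)) = ereal j" "\<forall>\<theta>. j \<le> r' \<theta>" "\<And>x. x > j \<Longrightarrow> \<exists>\<theta>. r' \<theta> < x"
    using ereal_inf_real[OF lb'] by blast
  have dpos: "\<delta> > 0" using e0 ed by simp
  obtain t1 where t1: "r t1 < i + \<delta>/4" using i(3)[of "i + \<delta>/4"] dpos by auto
  have t1A: "t1 \<in> A" using sub i(1) t1 dpos by auto
  show ?thesis
  proof (cases "r' t1 \<le> j + e")
    case True
    then have "t1 \<in> {th. ereal (r' th) \<le> (INF v. ereal (r' v)) + ereal e}" using j(1) by simp
    then show ?thesis using t1A by blast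
  next
    case False
    obtain t2 where t2: "r' t2 < j + min e (\<delta>/4)" using j(3)[of "j + min e (\<delta>/4)"] dpos e0 by auto
    have "r t2 \<le> r' t2 + e" using dev[rule_format, of t2] by linarith
    moreover have "r' t1 \<le> r t1 + e" using dev[rule_format, of t1] by linarith
    moreover have "min e (\<delta>/4) \<le> \<delta>/4" by simp
    ultimately have "r t2 \<le> i + \<delta>" using t1 t2 False ed by linarith
    then have "t2 \<in> A" using sub i(1) by auto
    moreover have "r' t2 \<le> j + e" using t2 by simp
    moreover have "t2 \<in> {th. ereal (r' th) \<le> (INF v. ereal (r' v)) + ereal e}" using j(1) t2 by simp
    ultimately show ?thesis by blast
  qed
qed


lemma set_boot:
  assumes "m > 0"
  shows "set_pmf (boot_dist m S) = PiE_dflt {..<m} undefined (\<lambda>_. S ` {..<m})"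
proof -
  have "set_pmf (pmf_of_set {..<m}) = {..<m}" using assms by (intro set_pmf_of_set) auto
  then show ?thesis by (simp add: boot_dist_def unif_sample_def set_Pi_pmf o_def)
qed

lemma risk_unif:
  assumes "m > 0"
  shows "risk L h (measure_pmf (unif_sample m S)) th = emp_risk L h m S th"
proof -
  have "measure_pmf.expectation (pmf_of_set {..<m}) f = sum f {..<m} / card {..<m}" for f :: "nat \<Rightarrow> real"
    using assms by (intro integral_pmf_of_set) auto
  then show ?thesis by (simp add: risk_def unif_sample_def emp_risk_def)
qed

lemma emp_risk_0[simp]: "emp_risk L h 0 S th = 0"
  by (simp add: emp_risk_def)

definition good1 where "good1 D L h m c = {S \<in> space (sample_dist D m). \<forall>th. \<bar>risk L h D th - emp_risk L h m S th\<bar> \<le> c}"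
definition good2 where "good2 L h m S c = {S'. \<forall>th. \<bar>emp_risk L h m S th - emp_risk L h m S' th\<bar> \<le> c}"
definition COND where "COND D L h \<alpha> c m \<longleftrightarrow> measure (sample_dist D m) (good1 D L h m c) \<ge> 1-\<alpha>
   \<and> (\<forall>S\<in>space (sample_dist D m). measure_pmf.prob (boot_dist m S) (good2 L h m S c) \<ge> 1-\<alpha>)"

lemma witness_COND:
  assumes "suc_witness D L h w" "0 < c" "0 < \<alpha>" "w c \<alpha> \<le> real m"
  shows "COND D L h \<alpha> c m"
proof -
  have W: "measure (sample_dist D m)
          {S \<in> space (sample_dist D m). \<forall>th. \<bar>risk L h D th - emp_risk L h m S th\<bar> \<le> c}
          \<ge> 1 - \<alpha>
      \<and> (\<forall>S \<in> space (sample_dist D m).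
          measure_pmf.prob (boot_dist m S)
            {S'. \<forall>th. \<bar>risk L h (measure_pmf (unif_sample m S)) th - emp_risk L h m S' th\<bar> \<le> c}
          \<ge> 1 - \<alpha>)" using assms unfolding suc_witness_def by blast
  show ?thesis
  proof (cases "m = 0")
    case True
    have "good2 L h m S c = UNIV" for S using True \<open>0 < c\<close> by (auto simp: good2_def)
    then show ?thesis using W assms(3) unfolding COND_def good1_def by simp
  next
    case False
    then show ?thesis using W unfolding COND_def good1_def good2_def by (simp add: risk_unif)
  qed
qed

lemma suc_fun_lt:
  assumes "suc_fun D L h c \<alpha> < ereal (real m + 1)"
  shows "\<exists>w. suc_witness D L h w \<and> w c \<alpha> \<le> real m"
proof -
  obtain w where w: "suc_witness D L h w" "ereal (of_int \<lceil>w c \<alpha>\<rceil>) < ereal (real m + 1)"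
    using assms unfolding suc_fun_def by (auto simp: INF_less_iff)
  then have "\<lceil>w c \<alpha>\<rceil> < int m + 1" by simp
  then have "\<lceil>w c \<alpha>\<rceil> \<le> int m" by linarith
  then have "w c \<alpha> \<le> real m" by linarith
  then show ?thesis using w by blast
qed

lemma suc_fun_finite:
  assumes "suc_witness D L h w"
  shows "suc_fun D L h c \<alpha> \<le> ereal (of_int \<lceil>w c \<alpha>\<rceil>)"
  unfolding suc_fun_def using assms by (auto intro!: INF_lower)


lemma le_of_le_seq:
  fixes y c0 :: real
  assumes "\<forall>n::nat. y \<le> c0 + 1 / (real n + 1)"
  shows "y \<le> c0"
proof (rule ccontr)
  assume "\<not> y \<le> c0"
  then have "y - c0 > 0" by simp
  then obtain n :: nat where n: "n > 0" "inverse (real n) < y - c0" using ex_inverse_of_nat_less by blast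
  have "1 / (real n + 1) \<le> inverse (real n)" using n(1) by (simp add: field_simps)
  then show False using assms[rule_format, of n] n by linarith
qed

lemma lim_generic:
  assumes "finite_measure M" "\<And>n. A n \<in> sets M" "decseq A" "\<And>n. a \<le> measure M (A n)"
  shows "a \<le> measure M (\<Inter>n. A n)"
proof -
  interpret finite_measure M by fact
  have "(\<lambda>n. measure M (A n)) \<longlonglongrightarrow> measure M (\<Inter>i. A i)"
    using assms by (intro finite_Lim_measure_decseq) auto
  then show ?thesis by (rule LIMSEQ_le_const) (use assms in auto)
qed

lemma inter_seq:
  "(\<Inter>n::nat. {x\<in>X. \<forall>th. g x th \<le> c0 + 1 / (real n + 1)}) = {x\<in>X. \<forall>th. g x th \<le> c0}"
proof (intro equalityI subsetI)
  fix x assume "x \<in> (\<Inter>n::nat. {x\<in>X. \<forall>th. g x th \<le> c0 + 1 / (real n + 1)})"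
  then show "x \<in> {x\<in>X. \<forall>th. g x th \<le> c0}" using le_of_le_seq by auto
next
  fix x assume "x \<in> {x\<in>X. \<forall>th. g x th \<le> c0}"
  moreover have "c0 \<le> c0 + 1 / (real n + 1)" for n :: nat by simp
  ultimately show "x \<in> (\<Inter>n::nat. {x\<in>X. \<forall>th. g x th \<le> c0 + 1 / (real n + 1)})" by (auto intro: order_trans)
qed

lemma sample_prob:
  assumes "prob_space D"
  shows "prob_space (sample_dist D m)"
  unfolding sample_dist_def by (rule prob_space_PiM) (use assms in auto)

lemma COND_mono:
  assumes D: "prob_space D" and c: "c \<le> c'" and C: "COND D L h \<alpha> c m"
    and meas: "good1 D L h m c' \<in> sets (sample_dist D m)"
  shows "COND D L h \<alpha> c' m"
proof -
  interpret P: prob_space "sample_dist D m" using sample_prob[OF D] .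
  have "measure (sample_dist D m) (good1 D L h m c) \<le> measure (sample_dist D m) (good1 D L h m c')"
    using c by (intro P.finite_measure_mono meas) (auto simp: good1_def, meson order_trans)
  moreover have "measure_pmf.prob (boot_dist m S) (good2 L h m S c) \<le> measure_pmf.prob (boot_dist m S) (good2 L h m S c')" for S
    using c by (intro measure_pmf.finite_measure_mono) (auto simp: good2_def, meson order_trans)
  ultimately show ?thesis using C unfolding COND_def by (meson order_trans)
qed

lemma COND_lim:
  assumes D: "prob_space D" and C: "\<And>c. c > c0 \<Longrightarrow> COND D L h \<alpha> c m"
    and meas: "\<And>c. good1 D L h m c \<in> sets (sample_dist D m)"
  shows "COND D L h \<alpha> c0 m"
proof -
  interpret P: prob_space "sample_dist D m" using sample_prob[OF D] .
  have pos: "c0 + 1 / (real n + 1) > c0" for n :: nat by simp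
  have ds1: "decseq (\<lambda>n::nat. good1 D L h m (c0 + 1 / (real n + 1)))"
    unfolding decseq_def good1_def by (auto simp: frac_le intro: order_trans)
  have g1: "(\<Inter>n::nat. good1 D L h m (c0 + 1 / (real n + 1))) = good1 D L h m c0"
    unfolding good1_def using inter_seq[where g="\<lambda>S th. \<bar>risk L h D th - emp_risk L h m S th\<bar>"] by simp
  have "1 - \<alpha> \<le> measure (sample_dist D m) (\<Inter>n::nat. good1 D L h m (c0 + 1 / (real n + 1)))"
    by (rule lim_generic[OF _ meas ds1]) (use C pos in \<open>auto simp: COND_def P.finite_measure_axioms\<close>)
  moreover have "1 - \<alpha> \<le> measure_pmf.prob (boot_dist m S) (good2 L h m S c0)"
    if "S \<in> space (sample_dist D m)" for S
  proof -
    have ds2: "decseq (\<lambda>n::nat. good2 L h m S (c0 + 1 / (real n + 1)))"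
      unfolding decseq_def good2_def by (auto simp: frac_le intro: order_trans)
    have g2: "(\<Inter>n::nat. good2 L h m S (c0 + 1 / (real n + 1))) = good2 L h m S c0"
      unfolding good2_def using inter_seq[where X=UNIV and g="\<lambda>S' th. \<bar>emp_risk L h m S th - emp_risk L h m S' th\<bar>"] by simp
    have "1 - \<alpha> \<le> measure_pmf.prob (boot_dist m S) (\<Inter>n::nat. good2 L h m S (c0 + 1 / (real n + 1)))"
      by (rule lim_generic[OF _ _ ds2]) (use C pos that in \<open>auto simp: COND_def measure_pmf.finite_measure_axioms\<close>)
    then show ?thesis using g2 by simp
  qed
  ultimately show ?thesis using g1 unfolding COND_def by simp
qed


lemma central_binom_step:
  "real (Suc k) * real ((2 * Suc k) choose Suc k) = 2 * (2 * real k + 1) * real ((2*k) choose k)"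
proof -
  define C where "C = (Suc (Suc (2*k)) choose Suc k)"
  define X where "X = (Suc (2*k) choose Suc k)"
  define Y where "Y = ((2*k) choose k)"
  have e1: "Suc k * C = Suc (Suc (2*k)) * (Suc (2*k) choose k)"
    unfolding C_def by (rule Suc_times_binomial)
  have e2: "Suc k * X = Suc (2*k) * Y"
    unfolding X_def Y_def by (rule Suc_times_binomial)
  have e3: "(Suc (2*k) choose k) = X"
    unfolding X_def using binomial_symmetric[of k "Suc (2*k)"] by simp
  have "Suc k * C = Suc k * (2 * X)" using e1 e3 by simp
  then have "C = 2 * X" by (simp only: mult_cancel1) simp
  then have "real (Suc k) * real C = 2 * (real (Suc k) * real X)" by simp
  also have "real (Suc k) * real X = real (Suc (2*k)) * real Y" using e2 by (metis of_nat_mult)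
  finally have "real (Suc k) * real C = 2 * (2 * real k + 1) * real Y" by simp
  moreover have "(2 * Suc k) = Suc (Suc (2*k))" by simp
  ultimately show ?thesis unfolding C_def Y_def by simp
qed

lemma central_binom_bound: "(real ((2*k) choose k) / 4^k)^2 * (2 * real k + 1) \<le> 1"
proof (induction k)
  case 0
  then show ?case by simp
next
  case (Suc k)
  define b where "b = real ((2*k) choose k)"
  define y where "y = (b / 4^k)^2"
  have y0: "y \<ge> 0" by (simp add: y_def)
  have IH: "y * (2 * real k + 1) \<le> 1" using Suc.IH by (simp add: y_def b_def)
  have b': "real ((2 * Suc k) choose Suc k) = 2 * (2 * real k + 1) * b / (real k + 1)"
    using central_binom_step[of k] by (simp add: b_def field_simps)
  have q: "(4::real)^k > 0" by simp
  have "2 * (2 * real k + 1) * b / (real k + 1) / (4 * 4^k) = (b / 4^k) * ((2 * real k + 1) / (2 * real k + 2))"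
  proof -
    have n1: "real k + 1 \<noteq> 0" "2 * real k + 2 \<noteq> 0" "(4::real)^k \<noteq> 0" by simp_all
    show ?thesis by (simp add: divide_simps n1) (simp add: algebra_simps)
  qed
  then have E: "real ((2 * Suc k) choose Suc k) / 4 ^ Suc k = (b / 4^k) * ((2 * real k + 1) / (2 * real k + 2))"
    unfolding b' by simp
  have P: "(real ((2 * Suc k) choose Suc k) / 4 ^ Suc k)^2 = y * ((2 * real k + 1) / (2 * real k + 2))^2"
    unfolding E y_def by (rule power_mult_distrib)
  have alg: "((2 * x + 1) / (2 * x + 2))^2 * (2 * (x + 1) + 1) = (2 * x + 1) * (((2 * x + 1) * (2 * x + 3)) / (2 * x + 2)^2)"
    if "x \<ge> 0" for x :: real
    using that by (simp add: power2_eq_square field_simps)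
  have eq: "(real ((2 * Suc k) choose Suc k) / 4 ^ Suc k)^2 * (2 * real (Suc k) + 1)
      = y * (2 * real k + 1) * (((2 * real k + 1) * (2 * real k + 3)) / (2 * real k + 2)^2)"
    unfolding P using alg[of "real k"] by (simp only: of_nat_Suc mult.assoc) simp
  have le1: "((2 * x + 1) * (2 * x + 3)) / (2 * x + 2)^2 \<le> 1" if "x \<ge> 0" for x :: real
  proof -
    have "(2 * x + 2)^2 > 0" using that by simp
    moreover have "(2 * x + 1) * (2 * x + 3) \<le> (2 * x + 2)^2" by (simp add: power2_eq_square algebra_simps)
    ultimately show ?thesis by simp
  qed
  have nn: "y * (2 * real k + 1) \<ge> 0" using y0 by simp
  have "y * (2 * real k + 1) * (((2 * real k + 1) * (2 * real k + 3)) / (2 * real k + 2)^2) \<le> y * (2 * real k + 1)"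
    using mult_left_le[OF le1[OF of_nat_0_le_iff] nn] .
  then show ?case using eq IH by linarith
qed


lemma anticonc:
  fixes \<phi> :: "'z \<Rightarrow> real" and z1 z2 :: 'z
  assumes ne: "\<phi> z1 \<noteq> \<phi> z2" and k: "k > 0" and c: "c < \<bar>\<phi> z1 - \<phi> z2\<bar> / real (2*k)"
    and T_def: "T = (\<lambda>i::nat. if i < k then z1 else if i < 2*k then z2 else undefined)"
  shows "measure_pmf.prob (boot_dist (2*k) T)
     {T'. \<bar>(1/real(2*k)) * (\<Sum>i<2*k. \<phi> (T i)) - (1/real(2*k)) * (\<Sum>i<2*k. \<phi> (T' i))\<bar> \<le> c}
     \<le> real ((2*k) choose k) / 4^k"
proof -
  define n where "n = 2*k"
  have n0: "n > 0" using k by (simp add: n_def)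
  have z12: "z1 \<noteq> z2" using ne by auto
  have img: "T ` {..<n} = {z1, z2}"
  proof
    show "T ` {..<n} \<subseteq> {z1, z2}" by (auto simp: T_def n_def)
    have "T 0 = z1" "T k = z2" using k by (auto simp: T_def)
    moreover have "0 \<in> {..<n}" "k \<in> {..<n}" using k by (auto simp: n_def)
    ultimately show "{z1, z2} \<subseteq> T ` {..<n}" by (metis empty_subsetI image_eqI insert_subset)
  qed
  define P where "P = PiE_dflt {..<n} undefined (\<lambda>_. {z1, z2})"
  have SP: "set_pmf (boot_dist n T) = P" unfolding P_def using set_boot[OF n0, of T] img by simp
  have pu: "pmf (unif_sample n T) z = 1/2" if "z \<in> {z1, z2}" for z
  proof -
    have "pmf (unif_sample n T) z = measure (measure_pmf (pmf_of_set {..<n})) (T -` {z})"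
      by (simp add: unif_sample_def pmf_map)
    also have "\<dots> = card ({..<n} \<inter> T -` {z}) / card {..<n}"
      using n0 by (intro measure_pmf_of_set) auto
    also have "{..<n} \<inter> T -` {z} = (if z = z1 then {..<k} else {k..<n})"
      using that z12 by (auto simp: T_def n_def split: if_splits)
    also have "card (if z = z1 then {..<k} else {k..<n}) = k" by (simp add: n_def)
    finally show ?thesis using k by (simp add: n_def)
  qed
  have pT: "pmf (boot_dist n T) T' = (1/2)^n" if "T' \<in> P" for T'
  proof -
    have "pmf (boot_dist n T) T' = (\<Prod>i\<in>{..<n}. pmf (unif_sample n T) (T' i))"
      using that by (simp add: boot_dist_def pmf_Pi P_def PiE_dflt_def)
    also have "\<dots> = (\<Prod>i\<in>{..<n}. 1/2)"
      using that by (intro prod.cong refl pu) (auto simp: P_def PiE_dflt_def)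
    finally show ?thesis by simp
  qed
  define F where "F = {T' \<in> P. card {i\<in>{..<n}. T' i = z1} = k}"
  have finP: "finite P" unfolding P_def by (intro finite_PiE_dflt) auto
  have finF: "finite F" using finP by (simp add: F_def)
  define E where "E = {T'. \<bar>(1/real(2*k)) * (\<Sum>i<2*k. \<phi> (T i)) - (1/real(2*k)) * (\<Sum>i<2*k. \<phi> (T' i))\<bar> \<le> c}"
  have sumT: "(\<Sum>i<n. \<phi> (T i)) = real k * \<phi> z1 + real k * \<phi> z2"
  proof -
    have "(\<Sum>i<n. \<phi> (T i)) = (\<Sum>i<n. if i < k then \<phi> z1 else \<phi> z2)"
      by (intro sum.cong) (auto simp: T_def n_def)
    also have "\<dots> = (\<Sum>i\<in>{..<n} \<inter> {i. i < k}. \<phi> z1) + (\<Sum>i\<in>{..<n} \<inter> - {i. i < k}. \<phi> z2)"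
      by (rule sum.If_cases) simp
    also have "{..<n} \<inter> {i. i < k} = {..<k}" by (auto simp: n_def)
    also have "{..<n} \<inter> - {i. i < k} = {k..<n}" by auto
    finally show ?thesis by (simp add: n_def)
  qed
  have sub: "E \<inter> P \<subseteq> F"
  proof
    fix T' assume T': "T' \<in> E \<inter> P"
    define K where "K = {i\<in>{..<n}. T' i = z1}"
    have vals: "T' i \<in> {z1, z2}" if "i < n" for i using T' that by (auto simp: P_def PiE_dflt_def)
    have cK: "card K \<le> n"
    proof -
      have "card K \<le> card {..<n}" unfolding K_def by (rule card_mono) auto
      then show ?thesis by simp
    qed
    have sumT': "(\<Sum>i<n. \<phi> (T' i)) = real (card K) * \<phi> z1 + (real n - real (card K)) * \<phi> z2"
    proof -
      have "(\<Sum>i<n. \<phi> (T' i)) = (\<Sum>i<n. if T' i = z1 then \<phi> z1 else \<phi> z2)"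
        by (intro sum.cong refl) (use vals in auto)
      also have "\<dots> = (\<Sum>i\<in>{..<n} \<inter> {i. T' i = z1}. \<phi> z1) + (\<Sum>i\<in>{..<n} \<inter> - {i. T' i = z1}. \<phi> z2)"
        by (rule sum.If_cases) simp
      also have "{..<n} \<inter> {i. T' i = z1} = K" by (auto simp: K_def)
      also have "{..<n} \<inter> - {i. T' i = z1} = {..<n} - K" by (auto simp: K_def)
      finally have s1: "(\<Sum>i<n. \<phi> (T' i)) = (\<Sum>i\<in>K. \<phi> z1) + (\<Sum>i\<in>{..<n} - K. \<phi> z2)" .
      have "card ({..<n} - K) = n - card K"
        using card_Diff_subset[of K "{..<n}"] by (auto simp: K_def)
      then show ?thesis using cK s1 by (simp add: of_nat_diff)
    qed
    have "card K = k"
    proof (rule ccontr)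
      assume nk: "card K \<noteq> k"
      have d: "(1/real n) * (\<Sum>i<n. \<phi> (T i)) - (1/real n) * (\<Sum>i<n. \<phi> (T' i))
            = (real k - real (card K)) * (\<phi> z1 - \<phi> z2) / real n"
        unfolding sumT sumT' using n0 by (simp add: n_def field_simps)
      have "1 \<le> \<bar>real k - real (card K)\<bar>" using nk by linarith
      then have "\<bar>\<phi> z1 - \<phi> z2\<bar> \<le> \<bar>real k - real (card K)\<bar> * \<bar>\<phi> z1 - \<phi> z2\<bar>"
        by (simp add: mult_le_cancel_right1)
      then have "\<bar>\<phi> z1 - \<phi> z2\<bar> / real n \<le> \<bar>(real k - real (card K)) * (\<phi> z1 - \<phi> z2) / real n\<bar>"
        using n0 by (simp add: abs_mult divide_right_mono)
      moreover have "\<bar>(real k - real (card K)) * (\<phi> z1 - \<phi> z2) / real n\<bar> \<le> c"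
        using T' d by (simp add: E_def n_def)
      ultimately show False using c by (simp add: n_def)
    qed
    then show "T' \<in> F" using T' by (simp add: F_def K_def)
  qed
  have inj: "inj_on (\<lambda>T'. {i\<in>{..<n}. T' i = z1}) F"
  proof
    fix T1 T2 assume T1: "T1 \<in> F" and T2: "T2 \<in> F" and eq: "{i\<in>{..<n}. T1 i = z1} = {i\<in>{..<n}. T2 i = z1}"
    show "T1 = T2"
    proof
      fix i
      show "T1 i = T2 i"
      proof (cases "i < n")
        case True
        have "T1 i \<in> {z1, z2}" "T2 i \<in> {z1, z2}" using T1 T2 True by (auto simp: F_def P_def PiE_dflt_def)
        moreover have "T1 i = z1 \<longleftrightarrow> T2 i = z1" using eq True by blast
        ultimately show ?thesis by auto
      next
        case False
        then show ?thesis using T1 T2 by (auto simp: F_def P_def PiE_dflt_def)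
      qed
    qed
  qed
  have "card F \<le> card {B. B \<subseteq> {..<n} \<and> card B = k}"
    by (rule card_inj_on_le[OF inj]) (auto simp: F_def)
  also have "\<dots> = n choose k" using n_subsets[of "{..<n}" k] by simp
  finally have cF: "card F \<le> n choose k" .
  have "measure_pmf.prob (boot_dist n T) E = measure_pmf.prob (boot_dist n T) (E \<inter> P)"
    using measure_Int_set_pmf[of "boot_dist n T" E] SP by simp
  also have "\<dots> \<le> measure_pmf.prob (boot_dist n T) F"
    using sub by (intro measure_pmf.finite_measure_mono) auto
  also have "\<dots> = (\<Sum>T'\<in>F. pmf (boot_dist n T) T')" using finF by (rule measure_measure_pmf_finite)
  also have "\<dots> = (\<Sum>T'\<in>F. (1/2)^n)" by (intro sum.cong refl pT) (auto simp: F_def)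
  also have "\<dots> = real (card F) * (1/2)^n" by simp
  also have "\<dots> \<le> real (n choose k) * (1/2)^n" using cF by (intro mult_right_mono) auto
  also have "\<dots> = real ((2*k) choose k) / 4^k" by (simp add: n_def power_mult power_divide)
  finally show ?thesis unfolding E_def n_def .
qed


lemma space_sample: "space (sample_dist D m) = PiE {..<m} (\<lambda>_. space D)"
  by (simp add: sample_dist_def space_PiM)

lemma all_same_loss:
  assumes \<alpha>1: "\<alpha> < 1"
   and C: "\<forall>c>0. \<forall>m'\<ge>m. \<forall>T\<in>space (sample_dist D m'). measure_pmf.prob (boot_dist m' T) (good2 L h m' T c) \<ge> 1-\<alpha>"
   and z1: "z1 \<in> space D" and z2: "z2 \<in> space D"
  shows "L (h (fst z1) th) (snd z1) = L (h (fst z2) th) (snd z2)"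
proof (rule ccontr)
  define \<phi> where "\<phi> z = L (h (fst z) th) (snd z)" for z
  assume "L (h (fst z1) th) (snd z1) \<noteq> L (h (fst z2) th) (snd z2)"
  then have ne: "\<phi> z1 \<noteq> \<phi> z2" by (simp add: \<phi>_def)
  define b where "b = 1 / (1 - \<alpha>)^2"
  define k where "k = m + nat \<lceil>b\<rceil> + 1"
  have k0: "k > 0" and km: "2*k \<ge> m" by (auto simp: k_def)
  have kb: "2 * real k + 1 > b" unfolding k_def using real_nat_ceiling_ge[of b] by simp
  define T where "T = (\<lambda>i::nat. if i < k then z1 else if i < 2*k then z2 else undefined)"
  have Tsp: "T \<in> space (sample_dist D (2*k))"
    unfolding space_sample T_def using z1 z2 by (auto split: if_splits)
  define c where "c = \<bar>\<phi> z1 - \<phi> z2\<bar> / (2 * real (2*k))"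
  have cpos: "c > 0" using ne k0 by (simp add: c_def)
  have clt: "c < \<bar>\<phi> z1 - \<phi> z2\<bar> / real (2*k)" using ne k0 by (simp add: c_def field_simps)
  have "1 - \<alpha> \<le> measure_pmf.prob (boot_dist (2*k) T) (good2 L h (2*k) T c)"
    using C cpos km Tsp by blast
  also have "\<dots> \<le> measure_pmf.prob (boot_dist (2*k) T)
     {T'. \<bar>(1/real(2*k)) * (\<Sum>i<2*k. \<phi> (T i)) - (1/real(2*k)) * (\<Sum>i<2*k. \<phi> (T' i))\<bar> \<le> c}"
    by (intro measure_pmf.finite_measure_mono) (auto simp: good2_def emp_risk_def \<phi>_def)
  also have "\<dots> \<le> real ((2*k) choose k) / 4^k"
    by (rule anticonc[OF ne k0 clt T_def])
  finally have le: "1 - \<alpha> \<le> real ((2*k) choose k) / 4^k" .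
  have "(1 - \<alpha>)^2 \<le> (real ((2*k) choose k) / 4^k)^2"
    using le \<alpha>1 by (intro power_mono) auto
  then have "(1 - \<alpha>)^2 * (2 * real k + 1) \<le> (real ((2*k) choose k) / 4^k)^2 * (2 * real k + 1)"
    by (intro mult_right_mono) auto
  also have "\<dots> \<le> 1" by (rule central_binom_bound)
  finally have A: "(1 - \<alpha>)^2 * (2 * real k + 1) \<le> 1" .
  have pos: "(1 - \<alpha>)^2 > 0" using \<alpha>1 by simp
  have "(1 - \<alpha>)^2 * b = 1" using pos by (simp add: b_def)
  moreover have "(1 - \<alpha>)^2 * b < (1 - \<alpha>)^2 * (2 * real k + 1)" using kb pos by simp
  ultimately show False using A by linarith
qed

lemma single_emp:
  assumes m1: "m1 > 0" and S': "S' \<in> set_pmf (boot_dist m1 (\<lambda>i. if i < m1 then z0 else undefined))"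
  shows "emp_risk L h m1 S' th = L (h (fst z0) th) (snd z0)"
proof -
  have img: "(\<lambda>i. if i < m1 then z0 else undefined) ` {..<m1} = {z0}" using m1 by auto
  have "S' i = z0" if "i < m1" for i
    using S' that unfolding set_boot[OF m1] img by (auto simp: PiE_dflt_def)
  then have "(\<Sum>i<m1. L (h (fst (S' i)) th) (snd (S' i))) = (\<Sum>i<m1. L (h (fst z0) th) (snd z0))"
    by (intro sum.cong) auto
  then show ?thesis using m1 by (simp add: emp_risk_def)
qed

lemma single_hyp:
  assumes m1: "m1 > 0" and z0: "z0 \<in> space D"
    and hb: "\<forall>m. \<forall>S \<in> space (sample_dist D m).
        measure_pmf.prob (boot_dist m S) {S'. emp_eps_set L h m S' (eps m) \<noteq> {}} > 0"
  shows "\<exists>th0. ereal (L (h (fst z0) th0) (snd z0)) \<le> (INF v. ereal (L (h (fst z0) v) (snd z0))) + ereal (eps m1)"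
proof -
  define S0 where "S0 = (\<lambda>i. if i < m1 then z0 else undefined)"
  have "S0 \<in> space (sample_dist D m1)" unfolding space_sample S0_def using z0 by (auto split: if_splits)
  then have "measure_pmf.prob (boot_dist m1 S0) {S'. emp_eps_set L h m1 S' (eps m1) \<noteq> {}} > 0"
    using hb by blast
  then have "set_pmf (boot_dist m1 S0) \<inter> {S'. emp_eps_set L h m1 S' (eps m1) \<noteq> {}} \<noteq> {}"
    using measure_pmf_zero_iff by (metis less_irrefl)
  then obtain S' where S': "S' \<in> set_pmf (boot_dist m1 S0)" "emp_eps_set L h m1 S' (eps m1) \<noteq> {}" by blast
  have e: "emp_risk L h m1 S' th = L (h (fst z0) th) (snd z0)" for th
    using single_emp[OF m1 S'(1)[unfolded S0_def]] .
  from S'(2) obtain th0 where "th0 \<in> emp_eps_set L h m1 S' (eps m1)" by blast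
  then show ?thesis by (auto simp: emp_eps_set_def e)
qed


lemma div_ge_self:
  fixes a b :: real
  assumes "0 \<le> a" "a \<le> b" "b \<le> 1"
  shows "a \<le> a / b"
proof (cases "b = 0")
  case True then show ?thesis using assms by simp
next
  case False
  then have "b > 0" using assms by simp
  then show ?thesis using assms by (simp add: le_divide_eq mult_left_le)
qed

lemma main_step:
  assumes D: "prob_space D" and C: "COND D L h \<alpha> c m"
   and meas: "{S \<in> space (sample_dist D m). pl_boot L h m S \<epsilon> A \<ge> 1-\<alpha>} \<in> sets (sample_dist D m)"
   and DET: "\<And>S S'. S \<in> good1 D L h m c \<Longrightarrow> S' \<in> set_pmf (boot_dist m S) \<Longrightarrow> S' \<in> good2 L h m S c
        \<Longrightarrow> emp_eps_set L h m S' \<epsilon> \<inter> A \<noteq> {} \<and> emp_eps_set L h m S' \<epsilon> \<noteq> {}"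
  shows "measure (sample_dist D m) {S \<in> space (sample_dist D m). pl_boot L h m S \<epsilon> A \<ge> 1-\<alpha>} \<ge> 1-\<alpha>"
proof -
  interpret P: prob_space "sample_dist D m" using sample_prob[OF D] .
  have sub: "good1 D L h m c \<subseteq> {S \<in> space (sample_dist D m). pl_boot L h m S \<epsilon> A \<ge> 1-\<alpha>}"
  proof
    fix S assume S: "S \<in> good1 D L h m c"
    then have Ssp: "S \<in> space (sample_dist D m)" by (simp add: good1_def)
    let ?p = "boot_dist m S"
    let ?N = "{S'. emp_eps_set L h m S' \<epsilon> \<inter> A \<noteq> {} \<and> emp_eps_set L h m S' \<epsilon> \<noteq> {}}"
    let ?Dn = "{S'. emp_eps_set L h m S' \<epsilon> \<noteq> {}}"
    have "1 - \<alpha> \<le> measure_pmf.prob ?p (good2 L h m S c)" using C Ssp by (simp add: COND_def)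
    also have "\<dots> = measure_pmf.prob ?p (good2 L h m S c \<inter> set_pmf ?p)" by (simp add: measure_Int_set_pmf)
    also have "\<dots> \<le> measure_pmf.prob ?p ?N"
      using DET[OF S] by (intro measure_pmf.finite_measure_mono) auto
    also have "\<dots> \<le> measure_pmf.prob ?p ?N / measure_pmf.prob ?p ?Dn"
      by (intro div_ge_self measure_nonneg measure_pmf.finite_measure_mono measure_pmf.prob_le_1) auto
    also have "\<dots> = pl_boot L h m S \<epsilon> A" by (simp add: pl_boot_def)
    finally show "S \<in> {S \<in> space (sample_dist D m). pl_boot L h m S \<epsilon> A \<ge> 1-\<alpha>}" using Ssp by simp
  qed
  have "1 - \<alpha> \<le> measure (sample_dist D m) (good1 D L h m c)" using C by (simp add: COND_def)
  also have "\<dots> \<le> measure (sample_dist D m) {S \<in> space (sample_dist D m). pl_boot L h m S \<epsilon> A \<ge> 1-\<alpha>}"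
    by (rule P.finite_measure_mono[OF sub meas])
  finally show ?thesis .
qed

lemma boot_in_space:
  assumes S: "S \<in> space (sample_dist D m)" and S': "S' \<in> set_pmf (boot_dist m S)"
  shows "S' \<in> space (sample_dist D m)"
proof (cases "m = 0")
  case True
  then have "S' = (\<lambda>_. undefined)" using S' by (simp add: boot_dist_def)
  then show ?thesis using True by (simp add: space_sample)
next
  case False
  then have "S' \<in> PiE_dflt {..<m} undefined (\<lambda>_. S ` {..<m})" using S' set_boot by blast
  then show ?thesis using S unfolding space_sample by (fastforce simp: PiE_dflt_def PiE_def extensional_def Pi_def)
qed

definition Hyp where "Hyp D L h \<alpha> c0 m \<longleftrightarrow> (\<forall>c > c0. \<exists>c'. 0 < c' \<and> c' \<le> c \<and> (\<exists>w. suc_witness D L h w \<and> w c' \<alpha> \<le> real m))"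

lemma Hyp_COND:
  assumes D: "prob_space D" and H: "Hyp D L h \<alpha> c0 m" and mm: "m \<le> m'" and c: "c > c0" and a: "\<alpha> > 0"
    and meas: "\<And>m c. good1 D L h m c \<in> sets (sample_dist D m)"
  shows "COND D L h \<alpha> c m'"
proof -
  obtain c' w where "0 < c'" "c' \<le> c" "suc_witness D L h w" "w c' \<alpha> \<le> real m"
    using H c unfolding Hyp_def by blast
  moreover have "w c' \<alpha> \<le> real m'" using calculation mm by linarith
  ultimately show ?thesis using witness_COND[of D L h w c' \<alpha> m'] a COND_mono[OF D, of c' c] meas by blast
qed

lemma Hyp_COND0:
  assumes D: "prob_space D" and H: "Hyp D L h \<alpha> c0 m" and a: "\<alpha> > 0"
    and meas: "\<And>m c. good1 D L h m c \<in> sets (sample_dist D m)"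
  shows "COND D L h \<alpha> c0 m"
  using COND_lim[OF D _ meas] Hyp_COND[OF D H order_refl _ a meas] by blast


lemma eps_a_nonneg: "eps_a f m \<alpha> \<ge> 0"
  unfolding eps_a_def by (rule Inf_greatest) auto

lemma eps_b_nonneg: "eps_b f m \<alpha> \<ge> 0"
  unfolding eps_b_def by (rule Inf_greatest) auto

lemma Hyp_a:
  assumes "eps_a (suc_fun D L h) m \<alpha> = ereal \<epsilon>"
  shows "Hyp D L h \<alpha> (\<epsilon>/2) m"
  unfolding Hyp_def
proof (intro allI impI)
  fix c assume c: "c > \<epsilon>/2"
  have "eps_a (suc_fun D L h) m \<alpha> < ereal (2*c)" using assms c by simp
  then obtain e where e: "e > 0" "ereal (real m) \<ge> suc_fun D L h (e/2) \<alpha>" "ereal e < ereal (2*c)"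
    unfolding eps_a_def by (auto simp: Inf_less_iff)
  have "suc_fun D L h (e/2) \<alpha> < ereal (real m + 1)" using e(2) by (rule le_less_trans) simp
  then obtain w where "suc_witness D L h w" "w (e/2) \<alpha> \<le> real m" using suc_fun_lt by blast
  then show "\<exists>c'>0. c' \<le> c \<and> (\<exists>w. suc_witness D L h w \<and> w c' \<alpha> \<le> real m)"
    using e by (intro exI[of _ "e/2"]) auto
qed

lemma Hyp_b:
  assumes "eps_b (suc_fun D L h) m \<alpha> = ereal \<epsilon>"
  shows "Hyp D L h \<alpha> (\<epsilon>/2) m"
  unfolding Hyp_def
proof (intro allI impI)
  fix c assume c: "c > \<epsilon>/2"
  have "eps_b (suc_fun D L h) m \<alpha> < ereal (2*c)" using assms c by simp
  then obtain e where e: "e > 0" "ereal (real m) \<ge> (INF d \<in> {0<..<e}. suc_fun D L h ((e - d) / 2) \<alpha>)"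
      "ereal e < ereal (2*c)"
    unfolding eps_b_def by (auto simp: Inf_less_iff)
  have "(INF d \<in> {0<..<e}. suc_fun D L h ((e - d) / 2) \<alpha>) < ereal (real m + 1)"
    using e(2) by (rule le_less_trans) simp
  then obtain d where d: "d \<in> {0<..<e}" "suc_fun D L h ((e - d) / 2) \<alpha> < ereal (real m + 1)"
    by (auto simp: INF_less_iff)
  then obtain w where "suc_witness D L h w" "w ((e-d)/2) \<alpha> \<le> real m" using suc_fun_lt by blast
  then show "\<exists>c'>0. c' \<le> c \<and> (\<exists>w. suc_witness D L h w \<and> w c' \<alpha> \<le> real m)"
    using e d by (intro exI[of _ "(e-d)/2"]) auto
qed

lemma ereal_le_inf_bound:
  fixes a e b :: real and I :: ereal
  assumes "ereal a \<le> I + ereal e" "I \<le> ereal b"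
  shows "a - e \<le> b"
  using assms by (cases I) auto

lemma bounded_b:
  fixes \<alpha> :: real and eps :: "nat \<Rightarrow> real"
  assumes D: "prob_space D" and a1: "\<alpha> < 1" and a0: "\<alpha> > 0" and suc: "has_suc D L h"
   and hb: "\<forall>m. \<forall>S \<in> space (sample_dist D m).
        measure_pmf.prob (boot_dist m S) {S'. emp_eps_set L h m S' (eps m) \<noteq> {}} > 0"
   and meas: "\<And>m c. good1 D L h m c \<in> sets (sample_dist D m)"
  shows "\<exists>B. \<forall>th. B \<le> risk L h D th"
proof -
  have "\<exists>B. \<forall>th. B \<le> L (h (fst x) th) (snd x)" if x: "x \<in> space D" for x
  proof -
    obtain th0 where th0: "ereal (L (h (fst x) th0) (snd x)) \<le> (INF v. ereal (L (h (fst x) v) (snd x))) + ereal (eps 1)"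
      using single_hyp[of 1 x D L h eps] x hb by auto
    have "L (h (fst x) th0) (snd x) - eps 1 \<le> L (h (fst x) th) (snd x)" for th
      by (rule ereal_le_inf_bound[OF th0]) (rule INF_lower, simp)
    then show ?thesis by blast
  qed
  then obtain Bf where Bf: "\<And>x th. x \<in> space D \<Longrightarrow> Bf x \<le> L (h (fst x) th) (snd x)" by metis
  obtain w0 where w0: "suc_witness D L h w0" using suc by (auto simp: has_suc_def)
  define m2 where "m2 = Suc (nat \<lceil>w0 1 \<alpha>\<rceil>)"
  have "w0 1 \<alpha> \<le> real m2" unfolding m2_def by linarith
  then have C: "COND D L h \<alpha> 1 m2" using witness_COND[OF w0] a0 by simp
  then have "measure (sample_dist D m2) (good1 D L h m2 1) > 0" using a1 by (simp add: COND_def)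
  then have "good1 D L h m2 1 \<noteq> {}" by auto
  then obtain S where S: "S \<in> good1 D L h m2 1" by blast
  have Ssp: "S i \<in> space D" if "i < m2" for i
    using S that by (auto simp: good1_def space_sample)
  define B where "B = (1 / real m2) * (\<Sum>i<m2. Bf (S i)) - 1"
  have "B \<le> risk L h D th" for th
  proof -
    have "(\<Sum>i<m2. Bf (S i)) \<le> (\<Sum>i<m2. L (h (fst (S i)) th) (snd (S i)))"
      by (intro sum_mono Bf Ssp) simp
    then have "(1 / real m2) * (\<Sum>i<m2. Bf (S i)) \<le> emp_risk L h m2 S th"
      unfolding emp_risk_def by (intro mult_left_mono) auto
    moreover have "\<bar>risk L h D th - emp_risk L h m2 S th\<bar> \<le> 1" using S by (simp add: good1_def)
    ultimately show ?thesis unfolding B_def by linarith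
  qed
  then show ?thesis by blast
qed


lemma argmin_b:
  fixes \<alpha> :: real
  assumes D: "prob_space D" and a1: "\<alpha> < 1" and a0: "\<alpha> > 0"
   and hb: "\<forall>m. \<forall>S \<in> space (sample_dist D m).
        measure_pmf.prob (boot_dist m S) {S'. emp_eps_set L h m S' (real_of_ereal (eps_b (suc_fun D L h) m \<alpha>)) \<noteq> {}} > 0"
   and meas: "\<And>m c. good1 D L h m c \<in> sets (sample_dist D m)"
   and E0: "eps_b (suc_fun D L h) m \<alpha> = 0"
  shows "\<exists>th0. \<forall>th. risk L h D th0 \<le> risk L h D th"
proof -
  have H: "Hyp D L h \<alpha> (0/2) m" by (rule Hyp_b) (simp add: E0 zero_ereal_def)
  have C: "\<forall>c>0. \<forall>m'\<ge>m. \<forall>T\<in>space (sample_dist D m'). measure_pmf.prob (boot_dist m' T) (good2 L h m' T c) \<ge> 1-\<alpha>"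
    using Hyp_COND[OF D H _ _ a0 meas] by (simp add: COND_def)
  have same: "L (h (fst z1) th) (snd z1) = L (h (fst z2) th) (snd z2)" if "z1 \<in> space D" "z2 \<in> space D" for z1 z2 th
    by (rule all_same_loss[OF a1 C that])
  obtain z0 where z0: "z0 \<in> space D" using prob_space.not_empty[OF D] by blast
  have Rg: "risk L h D th = L (h (fst z0) th) (snd z0)" for th
  proof -
    have "risk L h D th = (\<integral>z. L (h (fst z0) th) (snd z0) \<partial>D)"
      unfolding risk_def by (intro Bochner_Integration.integral_cong refl) (rule same[OF _ z0])
    also have "\<dots> = L (h (fst z0) th) (snd z0)" using prob_space.prob_space[OF D] by simp
    finally show ?thesis .
  qed
  have "eps_b (suc_fun D L h) (Suc m) \<alpha> \<le> eps_b (suc_fun D L h) m \<alpha>"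
  proof -
    have "ereal (real m) \<le> ereal (real (Suc m))" by simp
    then show ?thesis
      unfolding eps_b_def by (intro Inf_superset_mono) (blast intro: order_trans)
  qed
  then have E1: "eps_b (suc_fun D L h) (Suc m) \<alpha> = 0" using E0 eps_b_nonneg[of "suc_fun D L h" "Suc m" \<alpha>] by simp
  obtain th0 where th0: "ereal (L (h (fst z0) th0) (snd z0)) \<le> (INF v. ereal (L (h (fst z0) v) (snd z0)))
        + ereal (real_of_ereal (eps_b (suc_fun D L h) (Suc m) \<alpha>))"
    using single_hyp[of "Suc m" z0 D L h "\<lambda>m. real_of_ereal (eps_b (suc_fun D L h) m \<alpha>)"] z0 hb by auto
  have "L (h (fst z0) th0) (snd z0) \<le> L (h (fst z0) th) (snd z0)" for th
  proof -
    have "ereal (L (h (fst z0) th0) (snd z0)) \<le> (INF v. ereal (L (h (fst z0) v) (snd z0)))"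
      using th0 E1 by (simp add: zero_ereal_def)
    also have "\<dots> \<le> ereal (L (h (fst z0) th) (snd z0))" by (rule INF_lower) simp
    finally show ?thesis by simp
  qed
  then show ?thesis using Rg by metis
qed

theorem theorem4:
  fixes D :: "('x \<times> 'y) measure"
    and L :: "'y \<Rightarrow> 'y \<Rightarrow> real"
    and h :: "'x \<Rightarrow> 'p::topological_space \<Rightarrow> 'y"
    and A :: "'p set"
    and \<delta> \<alpha> :: real
  assumes D: "prob_space D"
    and integrable: "\<And>th. integrable D (\<lambda>z. L (h (fst z) th) (snd z))"
    and A_borel: "A \<in> sets borel"
    and \<delta>_pos: "\<delta> > 0"
    and A_sup: "risk_delta_set L h D \<delta> \<subseteq> A"
    and suc: "has_suc D L h"
    and \<alpha>_pos: "\<alpha> > 0"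
    and meas_unif: "\<And>m eps. {S \<in> space (sample_dist D m).
          \<forall>th. \<bar>risk L h D th - emp_risk L h m S th\<bar> \<le> eps} \<in> sets (sample_dist D m)"
    and meas_a: "\<And>m. {S \<in> space (sample_dist D m).
          pl_boot L h m S (real_of_ereal (eps_a (suc_fun D L h) m \<alpha>)) A \<ge> 1 - \<alpha>}
          \<in> sets (sample_dist D m)"
    and meas_b: "\<And>m. {S \<in> space (sample_dist D m).
          pl_boot L h m S (real_of_ereal (eps_b (suc_fun D L h) m \<alpha>)) A \<ge> 1 - \<alpha>}
          \<in> sets (sample_dist D m)"
  shows
    "((\<exists>th0. \<forall>th. risk L h D th0 \<le> risk L h D th)
       \<and> (\<forall>m. \<forall>S \<in> space (sample_dist D m). \<exists>th. \<forall>th'. emp_risk L h m S th \<le> emp_risk L h m S th')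
      \<longrightarrow>
       liminf (\<lambda>m. ereal (measure (sample_dist D m) {S \<in> space (sample_dist D m).
           pl_boot L h m S (real_of_ereal (eps_a (suc_fun D L h) m \<alpha>)) A \<ge> 1 - \<alpha>}))
         \<ge> ereal (1 - \<alpha>)
     \<and> (\<forall>m. eps_a (suc_fun D L h) m \<alpha> \<le> ereal \<delta> \<longrightarrow>
         measure (sample_dist D m) {S \<in> space (sample_dist D m).
           pl_boot L h m S (real_of_ereal (eps_a (suc_fun D L h) m \<alpha>)) A \<ge> 1 - \<alpha>} \<ge> 1 - \<alpha>))
   \<and>
    ((\<forall>m. \<forall>S \<in> space (sample_dist D m).
        measure_pmf.prob (boot_dist m S)
          {S'. emp_eps_set L h m S' (real_of_ereal (eps_b (suc_fun D L h) m \<alpha>)) \<noteq> {}} > 0)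
      \<longrightarrow>
       liminf (\<lambda>m. ereal (measure (sample_dist D m) {S \<in> space (sample_dist D m).
           pl_boot L h m S (real_of_ereal (eps_b (suc_fun D L h) m \<alpha>)) A \<ge> 1 - \<alpha>}))
         \<ge> ereal (1 - \<alpha>)
     \<and> (\<forall>m. eps_b (suc_fun D L h) m \<alpha> \<le> ereal (\<delta> / 2) \<longrightarrow>
         measure (sample_dist D m) {S \<in> space (sample_dist D m).
           pl_boot L h m S (real_of_ereal (eps_b (suc_fun D L h) m \<alpha>)) A \<ge> 1 - \<alpha>} \<ge> 1 - \<alpha>))"
proof -
  let ?f = "suc_fun D L h"
  have meas1: "\<And>m c. good1 D L h m c \<in> sets (sample_dist D m)" using meas_unif unfolding good1_def .
  obtain w0 where w0: "suc_witness D L h w0" using suc by (auto simp: has_suc_def)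
  have sub: "{th. ereal (risk L h D th) \<le> (INF v. ereal (risk L h D v)) + ereal \<delta>} \<subseteq> A"
    using A_sup unfolding risk_delta_set_def .
  have liminf_rule: "liminf X \<ge> ereal (1 - \<alpha>)" if "\<exists>N. \<forall>m\<ge>N. ereal (1 - \<alpha>) \<le> X m" for X :: "nat \<Rightarrow> ereal"
    by (rule Liminf_bounded) (use that in \<open>simp add: eventually_sequentially\<close>)
  show ?thesis
  proof (cases "\<alpha> < 1")
    case False
    have m0: "1 - \<alpha> \<le> measure M X" for M :: "(nat \<Rightarrow> 'x \<times> 'y) measure" and X
      using False measure_nonneg[of M X] by linarith
    show ?thesis using m0 by (auto intro!: liminf_rule)
  next
    case a1: True
    have partA2: "measure (sample_dist D m) {S \<in> space (sample_dist D m).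
           pl_boot L h m S (real_of_ereal (eps_a ?f m \<alpha>)) A \<ge> 1 - \<alpha>} \<ge> 1 - \<alpha>"
      if HA: "(\<exists>th0. \<forall>th. risk L h D th0 \<le> risk L h D th)
       \<and> (\<forall>m. \<forall>S \<in> space (sample_dist D m). \<exists>th. \<forall>th'. emp_risk L h m S th \<le> emp_risk L h m S th')"
        and le: "eps_a ?f m \<alpha> \<le> ereal \<delta>" for m
    proof -
      obtain \<epsilon> where E: "eps_a ?f m \<alpha> = ereal \<epsilon>"
        using le eps_a_nonneg[of ?f m \<alpha>] by (cases "eps_a ?f m \<alpha>") auto
      have e0: "0 \<le> \<epsilon>" and ed: "\<epsilon> \<le> \<delta>" using le eps_a_nonneg[of ?f m \<alpha>] E by auto
      have C: "COND D L h \<alpha> (\<epsilon>/2) m" by (rule Hyp_COND0[OF D Hyp_a[OF E] \<alpha>_pos meas1])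
      obtain th0 where th0: "\<forall>th. risk L h D th0 \<le> risk L h D th" using HA by blast
      have "measure (sample_dist D m) {S \<in> space (sample_dist D m). pl_boot L h m S \<epsilon> A \<ge> 1-\<alpha>} \<ge> 1-\<alpha>"
      proof (rule main_step[OF D C])
        show "{S \<in> space (sample_dist D m). pl_boot L h m S \<epsilon> A \<ge> 1-\<alpha>} \<in> sets (sample_dist D m)"
          using meas_a[of m] E by simp
      next
        fix S S' assume S: "S \<in> good1 D L h m (\<epsilon>/2)" and S': "S' \<in> set_pmf (boot_dist m S)"
          and g2: "S' \<in> good2 L h m S (\<epsilon>/2)"
        have Ssp: "S \<in> space (sample_dist D m)" using S by (simp add: good1_def)
        obtain t where t: "\<forall>th'. emp_risk L h m S' t \<le> emp_risk L h m S' th'"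
          using HA boot_in_space[OF Ssp S'] by blast
        have dev: "\<forall>th. \<bar>risk L h D th - emp_risk L h m S' th\<bar> \<le> \<epsilon>"
        proof
          fix th
          have "\<bar>risk L h D th - emp_risk L h m S th\<bar> \<le> \<epsilon>/2" using S by (simp add: good1_def)
          moreover have "\<bar>emp_risk L h m S th - emp_risk L h m S' th\<bar> \<le> \<epsilon>/2" using g2 by (simp add: good2_def)
          ultimately show "\<bar>risk L h D th - emp_risk L h m S' th\<bar> \<le> \<epsilon>" by linarith
        qed
        show "emp_eps_set L h m S' \<epsilon> \<inter> A \<noteq> {} \<and> emp_eps_set L h m S' \<epsilon> \<noteq> {}"
          unfolding emp_eps_set_def by (rule keyA[OF th0 t dev e0 ed sub])
      qed
      then show ?thesis using E by simp
    qed
    have partB2: "measure (sample_dist D m) {S \<in> space (sample_dist D m).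
           pl_boot L h m S (real_of_ereal (eps_b ?f m \<alpha>)) A \<ge> 1 - \<alpha>} \<ge> 1 - \<alpha>"
      if HB: "\<forall>m. \<forall>S \<in> space (sample_dist D m).
        measure_pmf.prob (boot_dist m S)
          {S'. emp_eps_set L h m S' (real_of_ereal (eps_b ?f m \<alpha>)) \<noteq> {}} > 0"
        and le: "eps_b ?f m \<alpha> \<le> ereal (\<delta>/2)" for m
    proof -
      obtain \<epsilon> where E: "eps_b ?f m \<alpha> = ereal \<epsilon>"
        using le eps_b_nonneg[of ?f m \<alpha>] by (cases "eps_b ?f m \<alpha>") auto
      have e0: "0 \<le> \<epsilon>" and ed: "2 * \<epsilon> \<le> \<delta>" using le eps_b_nonneg[of ?f m \<alpha>] E by auto
      have C: "COND D L h \<alpha> (\<epsilon>/2) m" by (rule Hyp_COND0[OF D Hyp_b[OF E] \<alpha>_pos meas1])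
      obtain B where B: "\<forall>th. B \<le> risk L h D th"
        using bounded_b[OF D a1 \<alpha>_pos suc HB meas1] by blast
      have "measure (sample_dist D m) {S \<in> space (sample_dist D m). pl_boot L h m S \<epsilon> A \<ge> 1-\<alpha>} \<ge> 1-\<alpha>"
      proof (rule main_step[OF D C])
        show "{S \<in> space (sample_dist D m). pl_boot L h m S \<epsilon> A \<ge> 1-\<alpha>} \<in> sets (sample_dist D m)"
          using meas_b[of m] E by simp
      next
        fix S S' assume S: "S \<in> good1 D L h m (\<epsilon>/2)" and S': "S' \<in> set_pmf (boot_dist m S)"
          and g2: "S' \<in> good2 L h m S (\<epsilon>/2)"
        have dev: "\<forall>th. \<bar>risk L h D th - emp_risk L h m S' th\<bar> \<le> \<epsilon>"
        proof
          fix th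
          have "\<bar>risk L h D th - emp_risk L h m S th\<bar> \<le> \<epsilon>/2" using S by (simp add: good1_def)
          moreover have "\<bar>emp_risk L h m S th - emp_risk L h m S' th\<bar> \<le> \<epsilon>/2" using g2 by (simp add: good2_def)
          ultimately show "\<bar>risk L h D th - emp_risk L h m S' th\<bar> \<le> \<epsilon>" by linarith
        qed
        show "emp_eps_set L h m S' \<epsilon> \<inter> A \<noteq> {} \<and> emp_eps_set L h m S' \<epsilon> \<noteq> {}"
        proof (cases "\<epsilon> > 0")
          case True
          then show ?thesis unfolding emp_eps_set_def by (rule keyB[OF B dev _ ed sub])
        next
          case False
          then have ez: "\<epsilon> = 0" using e0 by simp
          then have E0: "eps_b ?f m \<alpha> = 0" using E by (simp add: zero_ereal_def)
          obtain th0 where th0: "\<forall>th. risk L h D th0 \<le> risk L h D th"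
            using argmin_b[OF D a1 \<alpha>_pos HB meas1 E0] by blast
          have eq: "emp_risk L h m S' th = risk L h D th" for th using dev ez by force
          have t: "\<forall>th. emp_risk L h m S' th0 \<le> emp_risk L h m S' th" using th0 eq by simp
          show ?thesis unfolding emp_eps_set_def by (rule keyA[OF th0 t dev e0 _ sub]) (use ez \<delta>_pos in simp)
        qed
      qed
      then show ?thesis using E by simp
    qed
    have evA: "\<exists>N. \<forall>m\<ge>N. eps_a ?f m \<alpha> \<le> ereal \<delta>"
    proof (intro exI allI impI)
      fix m assume m: "nat \<lceil>w0 (\<delta>/2) \<alpha>\<rceil> \<le> m"
      have "?f (\<delta>/2) \<alpha> \<le> ereal (of_int \<lceil>w0 (\<delta>/2) \<alpha>\<rceil>)" by (rule suc_fun_finite[OF w0])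
      also have "\<dots> \<le> ereal (real m)"
      proof -
        have "\<lceil>w0 (\<delta>/2) \<alpha>\<rceil> \<le> int m" using m by (simp add: nat_le_iff)
        then have "real_of_int \<lceil>w0 (\<delta>/2) \<alpha>\<rceil> \<le> real m" by (metis of_int_le_iff of_int_of_nat_eq)
        then show ?thesis by simp
      qed
      finally have "ereal \<delta> \<in> {ereal e | e. e > 0 \<and> ereal (real m) \<ge> ?f (e / 2) \<alpha>}" using \<delta>_pos by auto
      then show "eps_a ?f m \<alpha> \<le> ereal \<delta>" unfolding eps_a_def by (rule Inf_lower)
    qed
    have evB: "\<exists>N. \<forall>m\<ge>N. eps_b ?f m \<alpha> \<le> ereal (\<delta>/2)"
    proof (intro exI allI impI)
      fix m assume m: "nat \<lceil>w0 (\<delta>/8) \<alpha>\<rceil> \<le> m"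
      have "(INF d \<in> {0<..<\<delta>/2}. ?f ((\<delta>/2 - d) / 2) \<alpha>) \<le> ?f ((\<delta>/2 - \<delta>/4) / 2) \<alpha>"
        by (rule INF_lower) (use \<delta>_pos in auto)
      also have "(\<delta>/2 - \<delta>/4) / 2 = \<delta>/8" by simp
      also have "?f (\<delta>/8) \<alpha> \<le> ereal (of_int \<lceil>w0 (\<delta>/8) \<alpha>\<rceil>)" by (rule suc_fun_finite[OF w0])
      also have "\<dots> \<le> ereal (real m)"
      proof -
        have "\<lceil>w0 (\<delta>/8) \<alpha>\<rceil> \<le> int m" using m by (simp add: nat_le_iff)
        then have "real_of_int \<lceil>w0 (\<delta>/8) \<alpha>\<rceil> \<le> real m" by (metis of_int_le_iff of_int_of_nat_eq)
        then show ?thesis by simp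
      qed
      finally have "ereal (\<delta>/2) \<in> {ereal e | e. e > 0 \<and>
         ereal (real m) \<ge> (INF d \<in> {0<..<e}. ?f ((e - d) / 2) \<alpha>)}"
        using \<delta>_pos by (intro CollectI exI[of _ "\<delta>/2"]) simp
      then show "eps_b ?f m \<alpha> \<le> ereal (\<delta>/2)" unfolding eps_b_def by (rule Inf_lower)
    qed
    show ?thesis
    proof (intro conjI impI allI)
      assume HA: "(\<exists>th0. \<forall>th. risk L h D th0 \<le> risk L h D th)
       \<and> (\<forall>m. \<forall>S \<in> space (sample_dist D m). \<exists>th. \<forall>th'. emp_risk L h m S th \<le> emp_risk L h m S th')"
      show "\<And>m. eps_a ?f m \<alpha> \<le> ereal \<delta> \<Longrightarrow> measure (sample_dist D m) {S \<in> space (sample_dist D m).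
           pl_boot L h m S (real_of_ereal (eps_a ?f m \<alpha>)) A \<ge> 1 - \<alpha>} \<ge> 1 - \<alpha>"
        using partA2[OF HA] by blast
      then show "liminf (\<lambda>m. ereal (measure (sample_dist D m) {S \<in> space (sample_dist D m).
           pl_boot L h m S (real_of_ereal (eps_a ?f m \<alpha>)) A \<ge> 1 - \<alpha>})) \<ge> ereal (1 - \<alpha>)"
        using evA by (intro liminf_rule) (meson ereal_less_eq(3))
    next
      assume HB: "\<forall>m. \<forall>S \<in> space (sample_dist D m).
        measure_pmf.prob (boot_dist m S)
          {S'. emp_eps_set L h m S' (real_of_ereal (eps_b ?f m \<alpha>)) \<noteq> {}} > 0"
      show "\<And>m. eps_b ?f m \<alpha> \<le> ereal (\<delta>/2) \<Longrightarrow> measure (sample_dist D m) {S \<in> space (sample_dist D m).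
           pl_boot L h m S (real_of_ereal (eps_b ?f m \<alpha>)) A \<ge> 1 - \<alpha>} \<ge> 1 - \<alpha>"
        using partB2[OF HB] by blast
      then show "liminf (\<lambda>m. ereal (measure (sample_dist D m) {S \<in> space (sample_dist D m).
           pl_boot L h m S (real_of_ereal (eps_b ?f m \<alpha>)) A \<ge> 1 - \<alpha>})) \<ge> ereal (1 - \<alpha>)"
        using evB by (intro liminf_rule) (meson ereal_less_eq(3))
    qed
  qed
qed

end
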